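(* Let $t\ge2$, let $A_t$ be the adjacency matrix of the cycle $C_{2t+1}$ and let $\lambda_t$ be the least eigenvalue of $A_t$. Then the matrix $A_t-\lambda_tI$ is doubly nonnegative, its support graph is $C_{2t+1}$, and it admits no $\mathcal{N}^+$-factorization for any tracial von Neumann algebra $(\mathcal{N},\tau)$.
   Context: The cycle $C_k$ has vertex set $[k]$ with $u\sim v$ iff $u-v\equiv\pm1\pmod k$; its adjacency matrix is $\sum_{u\sim v}(e_ue_v^{T}+e_ve_u^{T})$ (sum over edges). A real symmetric matrix is doubly nonnegative if it is positive semidefinite and entrywise nonnegative. The support graph of a symmetric $n\times n$ matrix $X$ is the graph on $[n]$ with $u\sim v$ iff $u\neq v$ and $X_{uv}\neq0$. A tracial von Neumann algebra $(\mathcal{N},\tau)$ is a unital weak-operator-closed $*$-algebra of bounded operators on a Hilbert space with a linear functional $\tau$ satisfying $\tau(x^*x)\ge0$, $\tau(1)=1$, $\tau(x^*x)=0\Rightarrow x=0$, $\tau(xy)=\tau(yx)$, and weak-operator continuity on the unit ball. $\mathcal{N}^+=\{x^*x:x\in\mathcal{N}\}$. A matrix $X$ admits an $\mathcal{N}^+$-factorization if $X_{ij}=\tau(p_ip_j)$ for some $p_1,\dots,p_n\in\mathcal{N}^+$. *)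

theory Defs
  imports "HOL-Analysis.Analysis"
begin

text \<open>An n x n real matrix is a function nat => nat => real, only entries with indices
  in {0..<n} being relevant. The vertex set [k] of the cycle is taken as {0..<k}.\<close>

definition cycle_adj :: "nat \<Rightarrow> nat \<Rightarrow> nat \<Rightarrow> bool" where
  "cycle_adj k u v \<longleftrightarrow> (Suc u) mod k = v \<or> (Suc v) mod k = u"

definition cycle_adjmat :: "nat \<Rightarrow> nat \<Rightarrow> nat \<Rightarrow> real" where
  "cycle_adjmat k u v = (if cycle_adj k u v then 1 else 0)"

definition idmat :: "nat \<Rightarrow> nat \<Rightarrow> real" where
  "idmat i j = (if i = j then 1 else 0)"

definition is_eigenvalue :: "nat \<Rightarrow> (nat \<Rightarrow> nat \<Rightarrow> real) \<Rightarrow> real \<Rightarrow> bool" where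
  "is_eigenvalue n A lam \<longleftrightarrow>
     (\<exists>v::nat \<Rightarrow> real. (\<exists>i<n. v i \<noteq> 0) \<and>
        (\<forall>i<n. (\<Sum>j<n. A i j * v j) = lam * v i))"

definition is_least_eigenvalue :: "nat \<Rightarrow> (nat \<Rightarrow> nat \<Rightarrow> real) \<Rightarrow> real \<Rightarrow> bool" where
  "is_least_eigenvalue n A lam \<longleftrightarrow>
     is_eigenvalue n A lam \<and> (\<forall>mu. is_eigenvalue n A mu \<longrightarrow> lam \<le> mu)"

definition symmetric_mat :: "nat \<Rightarrow> (nat \<Rightarrow> nat \<Rightarrow> real) \<Rightarrow> bool" where
  "symmetric_mat n X \<longleftrightarrow> (\<forall>i<n. \<forall>j<n. X i j = X j i)"

definition psd :: "nat \<Rightarrow> (nat \<Rightarrow> nat \<Rightarrow> real) \<Rightarrow> bool" where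
  "psd n X \<longleftrightarrow> symmetric_mat n X \<and>
     (\<forall>v::nat \<Rightarrow> real. 0 \<le> (\<Sum>i<n. \<Sum>j<n. v i * X i j * v j))"

definition doubly_nonnegative :: "nat \<Rightarrow> (nat \<Rightarrow> nat \<Rightarrow> real) \<Rightarrow> bool" where
  "doubly_nonnegative n X \<longleftrightarrow> psd n X \<and> (\<forall>i<n. \<forall>j<n. 0 \<le> X i j)"

definition support_adj :: "(nat \<Rightarrow> nat \<Rightarrow> real) \<Rightarrow> nat \<Rightarrow> nat \<Rightarrow> bool" where
  "support_adj X u v \<longleftrightarrow> u \<noteq> v \<and> X u v \<noteq> 0"

text \<open>A complex Hilbert space is modelled as a real Hilbert space ('h::{real_inner,complete_space})
  together with an orthogonal complex structure J (J o J = -id, J isometric); multiplication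
  by the imaginary unit is J.  The complex inner product is then
  <x,y>_C = inner x y + i * inner x (J y) (up to convention), so the real inner product determines it.\<close>

definition complex_structure :: "('h::real_inner \<Rightarrow> 'h) \<Rightarrow> bool" where
  "complex_structure J \<longleftrightarrow> linear J \<and> (\<forall>x. J (J x) = - x) \<and> (\<forall>x y. inner (J x) (J y) = inner x y)"

definition bop :: "('h::real_inner \<Rightarrow> 'h) \<Rightarrow> ('h \<Rightarrow> 'h) \<Rightarrow> bool" where
  "bop J T \<longleftrightarrow> bounded_linear T \<and> (\<forall>x. T (J x) = J (T x))"

definition cscale :: "('h::real_vector \<Rightarrow> 'h) \<Rightarrow> complex \<Rightarrow> ('h \<Rightarrow> 'h) \<Rightarrow> ('h \<Rightarrow> 'h)" where
  "cscale J c T = (\<lambda>x. Re c *\<^sub>R T x + Im c *\<^sub>R J (T x))"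

definition is_adjoint :: "('h::real_inner \<Rightarrow> 'h) \<Rightarrow> ('h \<Rightarrow> 'h) \<Rightarrow> bool" where
  "is_adjoint T S \<longleftrightarrow> (\<forall>x y. inner (T x) y = inner x (S y))"

definition adj :: "('h::real_inner \<Rightarrow> 'h) \<Rightarrow> ('h \<Rightarrow> 'h)" where
  "adj T = (THE S. is_adjoint T S)"

definition wot_closed :: "('h::real_inner \<Rightarrow> 'h) \<Rightarrow> ('h \<Rightarrow> 'h) set \<Rightarrow> bool" where
  "wot_closed J N \<longleftrightarrow>
     (\<forall>T. bop J T \<and>
        (\<forall>F::('h \<times> 'h) set. finite F \<longrightarrow> (\<forall>e>0. \<exists>S\<in>N. \<forall>(x,y)\<in>F. \<bar>inner (S x - T x) y\<bar> < e))
        \<longrightarrow> T \<in> N)"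

definition von_neumann_algebra :: "('h::{real_inner,complete_space} \<Rightarrow> 'h) \<Rightarrow> ('h \<Rightarrow> 'h) set \<Rightarrow> bool" where
  "von_neumann_algebra J N \<longleftrightarrow>
     complex_structure J \<and>
     (\<forall>T\<in>N. bop J T) \<and>
     id \<in> N \<and>
     (\<forall>S\<in>N. \<forall>T\<in>N. (\<lambda>x. S x + T x) \<in> N) \<and>
     (\<forall>c. \<forall>T\<in>N. cscale J c T \<in> N) \<and>
     (\<forall>S\<in>N. \<forall>T\<in>N. S \<circ> T \<in> N) \<and>
     (\<forall>T\<in>N. \<exists>S\<in>N. is_adjoint T S) \<and>
     wot_closed J N"

definition unit_ball_op :: "('h::real_normed_vector \<Rightarrow> 'h) set \<Rightarrow> ('h \<Rightarrow> 'h) set" where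
  "unit_ball_op N = {T\<in>N. onorm T \<le> 1}"

definition tracial_vna ::
  "('h::{real_inner,complete_space} \<Rightarrow> 'h) \<Rightarrow> ('h \<Rightarrow> 'h) set \<Rightarrow> (('h \<Rightarrow> 'h) \<Rightarrow> complex) \<Rightarrow> bool" where
  "tracial_vna J N \<tau> \<longleftrightarrow>
     von_neumann_algebra J N \<and>
     (\<forall>S\<in>N. \<forall>T\<in>N. \<tau> (\<lambda>x. S x + T x) = \<tau> S + \<tau> T) \<and>
     (\<forall>c. \<forall>T\<in>N. \<tau> (cscale J c T) = c * \<tau> T) \<and>
     (\<forall>x\<in>N. Im (\<tau> (adj x \<circ> x)) = 0 \<and> 0 \<le> Re (\<tau> (adj x \<circ> x))) \<and>
     \<tau> id = 1 \<and>
     (\<forall>x\<in>N. \<tau> (adj x \<circ> x) = 0 \<longrightarrow> x = (\<lambda>_. 0)) \<and>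
     (\<forall>x\<in>N. \<forall>y\<in>N. \<tau> (x \<circ> y) = \<tau> (y \<circ> x)) \<and>
     (\<forall>T\<in>unit_ball_op N. \<forall>e>0. \<exists>F::('h \<times> 'h) set. \<exists>d>0. finite F \<and>
        (\<forall>S\<in>unit_ball_op N. (\<forall>(x,y)\<in>F. \<bar>inner (S x - T x) y\<bar> < d) \<longrightarrow> cmod (\<tau> S - \<tau> T) < e))"

definition Npos :: "('h::real_inner \<Rightarrow> 'h) set \<Rightarrow> ('h \<Rightarrow> 'h) set" where
  "Npos N = {adj x \<circ> x | x. x \<in> N}"

definition Npos_factorizable ::
  "('h::real_inner \<Rightarrow> 'h) set \<Rightarrow> (('h \<Rightarrow> 'h) \<Rightarrow> complex) \<Rightarrow> nat \<Rightarrow> (nat \<Rightarrow> nat \<Rightarrow> real) \<Rightarrow> bool" where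
  "Npos_factorizable N \<tau> n X \<longleftrightarrow>
     (\<exists>p::nat \<Rightarrow> ('h \<Rightarrow> 'h). (\<forall>i<n. p i \<in> Npos N) \<and>
        (\<forall>i<n. \<forall>j<n. \<tau> (p i \<circ> p j) = complex_of_real (X i j)))"

end

theory Submission
  imports Defs
begin


definition bl :: "nat \<Rightarrow> (nat\<Rightarrow>nat\<Rightarrow>real) \<Rightarrow> (nat\<Rightarrow>real) \<Rightarrow> (nat\<Rightarrow>real) \<Rightarrow> real" where
  "bl n M x y = (\<Sum>i<n. \<Sum>j<n. x i * M i j * y j)"

lemma bl_expand:
  "bl n M (\<lambda>i. v i + e * g i) (\<lambda>i. v i + e * g i) =
     bl n M v v + e * bl n M v g + e * bl n M g v + e^2 * bl n M g g"
  unfolding bl_def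
  by (simp add: algebra_simps sum.distrib sum_distrib_left power2_eq_square)

lemma bl_sym:
  assumes "\<forall>i<n. \<forall>j<n. M i j = M j i"
  shows "bl n M x y = bl n M y x"
  unfolding bl_def
  apply (subst sum.swap)
  apply (intro sum.cong refl)
  using assms by (simp add: mult.commute)

lemma psd_zero_kernel:
  assumes sym: "\<forall>i<n. \<forall>j<n. M i j = M j i"
    and pos: "\<forall>u. 0 \<le> bl n M u u" and z: "bl n M v v = 0"
  shows "\<forall>i<n. (\<Sum>j<n. M i j * v j) = 0"
proof -
  define g where "g i = (\<Sum>j<n. M i j * v j)" for i
  define s where "s = (\<Sum>i<n. (g i)^2)"
  have gv: "bl n M g v = s"
    unfolding bl_def s_def g_def power2_eq_square
    by (simp add: sum_distrib_left mult.assoc)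
  have vg: "bl n M v g = s" using gv bl_sym[OF sym] by metis
  define c where "c = bl n M g g"
  have c0: "0 \<le> c" using pos c_def by auto
  have s0: "s = 0"
  proof (rule ccontr)
    assume "s \<noteq> 0"
    then have sp: "s > 0" unfolding s_def by (metis sum_nonneg zero_le_power2 order_le_less)
    define e where "e = - s / (c+1)"
    have "0 \<le> bl n M (\<lambda>i. v i + e * g i) (\<lambda>i. v i + e * g i)" using pos by blast
    also have "\<dots> = 2 * e * s + e^2 * c" using bl_expand[of n M v e g] z vg gv c_def by simp
    finally have h: "0 \<le> 2 * e * s + e^2 * c" .
    have ec: "e * (c+1) = -s" unfolding e_def using c0 by simp
    have "(c+1)^2 * (2 * e * s + e^2 * c) = 2 * s * (e * (c+1)) * (c+1) + (e * (c+1))^2 * c"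
      by (simp add: algebra_simps power2_eq_square)
    also have "\<dots> = -(s^2) * (c + 2)" unfolding ec by (simp add: algebra_simps power2_eq_square)
    finally have "(c+1)^2 * (2 * e * s + e^2 * c) = -(s^2) * (c + 2)" .
    moreover have "-(s^2) * (c+2) < 0" using sp c0 by (simp add: mult_pos_pos)
    moreover have "0 \<le> (c+1)^2 * (2 * e * s + e^2 * c)" using h by simp
    ultimately show False by linarith
  qed
  have "\<forall>i\<in>{..<n}. (g i)^2 = 0"
    using s0 unfolding s_def by (subst sum_nonneg_eq_0_iff[symmetric]) auto
  then show ?thesis unfolding g_def by auto
qed

lemma cont_coord: "continuous_on S (\<lambda>v::nat\<Rightarrow>real. v i)"
  by (rule continuous_on_subset[OF continuous_on_product_coordinates]) simp

lemma cont_bl: "continuous_on S (\<lambda>v. bl n M v v)"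
  unfolding bl_def by (intro continuous_on_sum continuous_on_mult continuous_on_const cont_coord)

lemma min_eig:
  assumes n: "n \<ge> 1" and sym: "\<forall>i<n. \<forall>j<n. M i j = M j i"
  shows "\<exists>m v. (\<exists>i<n. v i \<noteq> 0) \<and> (\<forall>i<n. (\<Sum>j<n. M i j * v j) = m * v i) \<and>
           (\<forall>u. m * (\<Sum>i<n. (u i)^2) \<le> bl n M u u)"
proof -
  define B where "B i = (if i < n then {-1..1} else {0::real})" for i
  define K where "K = PiE UNIV B"
  have "compactin (product_topology (\<lambda>i. euclidean) UNIV) K"
    unfolding K_def by (subst compactin_PiE) (auto simp: B_def)
  then have cK: "compact K" by (simp add: euclidean_product_topology)
  have cl: "closed {v::nat\<Rightarrow>real. (\<Sum>i<n. (v i)^2) = 1}"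
    by (intro closed_Collect_eq continuous_on_sum continuous_on_power continuous_on_const cont_coord)
  define S where "S = K \<inter> {v::nat\<Rightarrow>real. (\<Sum>i<n. (v i)^2) = 1}"
  have cS: "compact S" unfolding S_def using cK cl by blast
  define e0 where "e0 = (\<lambda>i::nat. if i = 0 then 1 else (0::real))"
  have "e0 \<in> K" using n by (auto simp: K_def B_def e0_def PiE_UNIV_domain)
  moreover have "(\<Sum>i<n. (e0 i)^2) = 1"
  proof -
    have "(\<Sum>i<n. (e0 i)^2) = (\<Sum>i<n. if i = 0 then 1 else 0)"
      by (intro sum.cong) (auto simp: e0_def)
    then show ?thesis using n by auto
  qed
  ultimately have "e0 \<in> S" unfolding S_def by simp
  then have ne: "S \<noteq> {}" by blast
  obtain v where vS: "v \<in> S" and vmin: "\<forall>y\<in>S. bl n M v v \<le> bl n M y y"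
    using continuous_attains_inf[OF cS ne cont_bl] by blast
  define m where "m = bl n M v v"
  have nv: "(\<Sum>i<n. (v i)^2) = 1" using vS S_def by auto
  have bnd: "m * (\<Sum>i<n. (u i)^2) \<le> bl n M u u" for u
  proof (cases "(\<Sum>i<n. (u i)^2) = 0")
    case True
    then have "\<forall>i\<in>{..<n}. (u i)^2 = 0" by (subst sum_nonneg_eq_0_iff[symmetric]) auto
    then have "bl n M u u = 0" unfolding bl_def by simp
    then show ?thesis using True by simp
  next
    case False
    define r where "r = sqrt (\<Sum>i<n. (u i)^2)"
    have sp: "(\<Sum>i<n. (u i)^2) > 0" using False by (metis sum_nonneg zero_le_power2 order_le_less)
    then have rp: "r > 0" unfolding r_def by simp
    have r2: "r^2 = (\<Sum>i<n. (u i)^2)" unfolding r_def using sp by simp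
    define u' where "u' i = (if i < n then u i / r else 0)" for i
    have "(\<Sum>i<n. (u' i)^2) = (\<Sum>i<n. (u i)^2 / r^2)"
      by (intro sum.cong) (auto simp: u'_def power_divide)
    also have "\<dots> = (\<Sum>i<n. (u i)^2) / r^2" by (simp add: sum_divide_distrib)
    also have "\<dots> = 1" using r2 rp sp by simp
    finally have nu': "(\<Sum>i<n. (u' i)^2) = 1" .
    have "u' i \<in> B i" for i
    proof (cases "i < n")
      case i: True
      have "(u' i)^2 \<le> (\<Sum>i<n. (u' i)^2)"
        using i by (intro member_le_sum) auto
      then have "(u' i)^2 \<le> 1" using nu' by simp
      then have "\<bar>u' i\<bar> \<le> 1" by (simp add: abs_square_le_1)
      then show ?thesis using i unfolding B_def by auto
    next
      case False then show ?thesis by (simp add: B_def u'_def)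
    qed
    then have "u' \<in> K" by (simp add: K_def PiE_UNIV_domain)
    then have "u' \<in> S" unfolding S_def using nu' by simp
    then have "m \<le> bl n M u' u'" using vmin m_def by blast
    also have "bl n M u' u' = (\<Sum>i<n. \<Sum>j<n. u i * M i j * u j / r^2)"
      unfolding bl_def u'_def by (intro sum.cong refl) (simp add: power2_eq_square)
    also have "\<dots> = bl n M u u / r^2" unfolding bl_def by (simp add: sum_divide_distrib)
    finally have "m * r^2 \<le> bl n M u u" using rp by (simp add: field_simps)
    then show ?thesis using r2 by simp
  qed
  define M' where "M' i j = M i j - m * idmat i j" for i j
  have blM': "bl n M' u u = bl n M u u - m * (\<Sum>i<n. (u i)^2)" for u
  proof -
    have inner: "(\<Sum>j<n. u i * (m * idmat i j) * u j) = m * (u i)^2" if "i < n" for i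
    proof -
      have "(\<Sum>j<n. u i * (m * idmat i j) * u j) = (\<Sum>j<n. if j = i then m * (u i)^2 else 0)"
        by (intro sum.cong) (auto simp: idmat_def power2_eq_square)
      then show ?thesis using that by simp
    qed
    have "bl n M' u u = (\<Sum>i<n. \<Sum>j<n. u i * M i j * u j - u i * (m * idmat i j) * u j)"
      unfolding bl_def M'_def by (simp add: algebra_simps)
    also have "\<dots> = bl n M u u - (\<Sum>i<n. \<Sum>j<n. u i * (m * idmat i j) * u j)"
      unfolding bl_def by (simp add: sum_subtractf)
    also have "(\<Sum>i<n. \<Sum>j<n. u i * (m * idmat i j) * u j) = (\<Sum>i<n. m * (u i)^2)"
      using inner by simp
    finally show ?thesis by (simp add: sum_distrib_left)
  qed
  have symM': "\<forall>i<n. \<forall>j<n. M' i j = M' j i" using sym unfolding M'_def idmat_def by auto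
  have "\<forall>i<n. (\<Sum>j<n. M' i j * v j) = 0"
    by (rule psd_zero_kernel[OF symM']) (use bnd blM' nv m_def in auto)
  then have eig: "\<forall>i<n. (\<Sum>j<n. M i j * v j) = m * v i"
  proof (intro allI impI)
    fix i assume i: "i < n" and h: "\<forall>i<n. (\<Sum>j<n. M' i j * v j) = 0"
    have d: "(\<Sum>j<n. m * idmat i j * v j) = (\<Sum>j<n. if j = i then m * v i else 0)"
      by (intro sum.cong) (auto simp: idmat_def)
    have "(\<Sum>j<n. M' i j * v j) = (\<Sum>j<n. M i j * v j - m * idmat i j * v j)"
      unfolding M'_def by (simp add: algebra_simps)
    also have "\<dots> = (\<Sum>j<n. M i j * v j) - m * v i"
      using i by (simp add: sum_subtractf d)
    finally show "(\<Sum>j<n. M i j * v j) = m * v i" using h i by simp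
  qed
  have "\<exists>i<n. v i \<noteq> 0"
  proof (rule ccontr)
    assume "\<not> (\<exists>i<n. v i \<noteq> 0)"
    then have "(\<Sum>i<n. (v i)^2) = 0" by simp
    then show False using nv by simp
  qed
  then show ?thesis using eig bnd by blast
qed



locale tv =
  fixes J :: "'h::{real_inner,complete_space} \<Rightarrow> 'h" and N and \<tau>
  assumes tv: "tracial_vna J N \<tau>"
begin

lemma vna: "von_neumann_algebra J N" using tv unfolding tracial_vna_def by blast

lemma bopN: "T \<in> N \<Longrightarrow> bop J T" using vna unfolding von_neumann_algebra_def by blast

lemma linN: "T \<in> N \<Longrightarrow> T 0 = 0"
  using bopN unfolding bop_def by (meson bounded_linear.linear linear_0)

lemma compN: "S \<in> N \<Longrightarrow> T \<in> N \<Longrightarrow> S \<circ> T \<in> N"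
  using vna unfolding von_neumann_algebra_def by blast

lemma addN: "S \<in> N \<Longrightarrow> T \<in> N \<Longrightarrow> (\<lambda>x. S x + T x) \<in> N"
  using vna unfolding von_neumann_algebra_def by blast

lemma cscaleN: "T \<in> N \<Longrightarrow> cscale J c T \<in> N"
  using vna unfolding von_neumann_algebra_def by blast

lemma idN: "id \<in> N"
  using vna unfolding von_neumann_algebra_def by blast

lemma tau_add: "S \<in> N \<Longrightarrow> T \<in> N \<Longrightarrow> \<tau> (\<lambda>x. S x + T x) = \<tau> S + \<tau> T"
  using tv unfolding tracial_vna_def by blast

lemma tau_cscale: "T \<in> N \<Longrightarrow> \<tau> (cscale J c T) = c * \<tau> T"
  using tv unfolding tracial_vna_def by blast

lemma tau_comm: "S \<in> N \<Longrightarrow> T \<in> N \<Longrightarrow> \<tau> (S \<circ> T) = \<tau> (T \<circ> S)"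
  using tv unfolding tracial_vna_def by blast

lemma faith: "T \<in> N \<Longrightarrow> \<tau> (adj T \<circ> T) = 0 \<Longrightarrow> T = (\<lambda>_. 0)"
  using tv unfolding tracial_vna_def by blast

lemma tau_pos: "T \<in> N \<Longrightarrow> Im (\<tau> (adj T \<circ> T)) = 0 \<and> 0 \<le> Re (\<tau> (adj T \<circ> T))"
  using tv unfolding tracial_vna_def by blast

lemma cscale_real: "cscale J (complex_of_real r) T = (\<lambda>x. r *\<^sub>R T x)"
  unfolding cscale_def by simp

lemma zeroN: "(\<lambda>_. 0) \<in> N" and tau_zero: "\<tau> (\<lambda>_. 0) = 0"
proof -
  have e: "cscale J 0 id = (\<lambda>_. 0)" unfolding cscale_def by simp
  show "(\<lambda>_. 0) \<in> N" using cscaleN[OF idN, of 0] e by simp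
  show "\<tau> (\<lambda>_. 0) = 0" using tau_cscale[OF idN, of 0] e by simp
qed

lemma scaleN: "T \<in> N \<Longrightarrow> (\<lambda>x. r *\<^sub>R T x) \<in> N"
  using cscaleN[of T "complex_of_real r"] by (simp add: cscale_real)

lemma tau_scale: "T \<in> N \<Longrightarrow> \<tau> (\<lambda>x. r *\<^sub>R T x) = complex_of_real r * \<tau> T"
  using tau_cscale[of T "complex_of_real r"] by (simp add: cscale_real)

lemma tau_sum:
  assumes "finite I" "\<forall>i\<in>I. T i \<in> N"
  shows "(\<lambda>z. \<Sum>i\<in>I. c i *\<^sub>R T i z) \<in> N \<and>
         \<tau> (\<lambda>z. \<Sum>i\<in>I. c i *\<^sub>R T i z) = (\<Sum>i\<in>I. complex_of_real (c i) * \<tau> (T i))"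
  using assms
proof (induction I rule: finite_induct)
  case empty
  then show ?case using zeroN tau_zero by simp
next
  case (insert a I)
  let ?R = "\<lambda>z. \<Sum>i\<in>I. c i *\<^sub>R T i z"
  have R: "?R \<in> N" "\<tau> ?R = (\<Sum>i\<in>I. complex_of_real (c i) * \<tau> (T i))" using insert by auto
  have Ta: "T a \<in> N" using insert by auto
  have eq: "(\<lambda>z. \<Sum>i\<in>insert a I. c i *\<^sub>R T i z) = (\<lambda>z. (\<lambda>x. c a *\<^sub>R T a x) z + ?R z)"
    using insert by simp
  show ?case unfolding eq
    using addN[OF scaleN[OF Ta] R(1)] tau_add[OF scaleN[OF Ta] R(1)] R(2) tau_scale[OF Ta] insert
    by simp
qed

lemma adj_unique: "is_adjoint T S \<Longrightarrow> is_adjoint T S' \<Longrightarrow> S = S'"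
proof (rule ext)
  fix y assume a: "is_adjoint T S" "is_adjoint T S'"
  have "inner x (S y - S' y) = 0" for x
    using a unfolding is_adjoint_def by (simp add: inner_diff_right)
  from this[of "S y - S' y"] show "S y = S' y" by simp
qed

lemma adj_eq: "is_adjoint T S \<Longrightarrow> adj T = S"
  unfolding adj_def using adj_unique by blast

lemma adjN: "T \<in> N \<Longrightarrow> adj T \<in> N \<and> is_adjoint T (adj T)"
proof -
  assume "T \<in> N"
  then obtain S where "S \<in> N" "is_adjoint T S" using vna unfolding von_neumann_algebra_def by blast
  then show ?thesis using adj_eq by auto
qed

lemma is_adjoint_sym: "is_adjoint T S \<Longrightarrow> is_adjoint S T"
  unfolding is_adjoint_def by (metis inner_commute)

lemma is_adjoint_comp: "is_adjoint S S' \<Longrightarrow> is_adjoint T T' \<Longrightarrow> is_adjoint (S \<circ> T) (T' \<circ> S')"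
  unfolding is_adjoint_def by simp

lemma adj_adj: "T \<in> N \<Longrightarrow> adj (adj T) = T"
  using adjN is_adjoint_sym adj_eq by blast

lemma adj_comp: "S \<in> N \<Longrightarrow> T \<in> N \<Longrightarrow> adj (S \<circ> T) = adj T \<circ> adj S"
  using adjN is_adjoint_comp adj_eq by blast

lemma comp_zero: "T \<in> N \<Longrightarrow> T \<circ> (\<lambda>_. 0) = (\<lambda>_. 0)"
  using linN by (auto simp: comp_def)

lemma zero_comp: "(\<lambda>_. 0) \<circ> T = (\<lambda>_. 0)"
  by (auto simp: comp_def)

lemma posN: "x \<in> N \<Longrightarrow> adj x \<circ> x \<in> N \<and> adj (adj x \<circ> x) = adj x \<circ> x"
  using adjN compN adj_comp adj_adj by metis

end



locale fz = tv +
  fixes n :: nat and p :: "nat \<Rightarrow> 'h::{real_inner,complete_space} \<Rightarrow> 'h" and X :: "nat \<Rightarrow> nat \<Rightarrow> real" and w :: "nat \<Rightarrow> real"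
  assumes pN: "\<forall>i<n. \<exists>x\<in>N. p i = adj x \<circ> x"
    and tX: "\<forall>i<n. \<forall>j<n. \<tau> (p i \<circ> p j) = complex_of_real (X i j)"
    and Xsym: "\<forall>i<n. \<forall>j<n. X i j = X j i"
    and ker: "\<forall>i<n. (\<Sum>j<n. X i j * w j) = 0"
begin

lemma pinN: "i < n \<Longrightarrow> p i \<in> N"
  using pN posN by metis

lemma padj: "i < n \<Longrightarrow> adj (p i) = p i"
  using pN posN by metis

lemma zero_prod1:
  assumes i: "i < n" and j: "j < n" and X0: "X i j = 0"
  shows "p j \<circ> p i = (\<lambda>_. 0)"
proof -
  obtain xi where xi: "xi \<in> N" "p i = adj xi \<circ> xi" using pN i by blast
  obtain xj where xj: "xj \<in> N" "p j = adj xj \<circ> xj" using pN j by blast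
  have axi: "adj xi \<in> N" and axj: "adj xj \<in> N" using adjN xi xj by auto
  have t0: "\<tau> (p i \<circ> p j) = 0" using tX i j X0 by simp
  have "p i \<circ> p j = adj xi \<circ> (xi \<circ> adj xj \<circ> xj)" using xi xj by (simp add: comp_assoc)
  then have tc: "\<tau> (p i \<circ> p j) = \<tau> ((xi \<circ> adj xj \<circ> xj) \<circ> adj xi)"
    using tau_comm[OF axi, of "xi \<circ> adj xj \<circ> xj"] compN xi xj axj by simp
  define y where "y = xj \<circ> adj xi"
  have yN: "y \<in> N" unfolding y_def using compN xj axi by simp
  have ay: "adj y = xi \<circ> adj xj" unfolding y_def using adj_comp[OF xj(1) axi] adj_adj[OF xi(1)] by simp
  have "adj y \<circ> y = (xi \<circ> adj xj) \<circ> y" using ay by simp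
  also have "\<dots> = (xi \<circ> adj xj \<circ> xj) \<circ> adj xi" unfolding y_def by (simp add: comp_assoc)
  finally have "(xi \<circ> adj xj \<circ> xj) \<circ> adj xi = adj y \<circ> y" by simp
  then have "\<tau> (adj y \<circ> y) = 0" using t0 tc by simp
  then have y0: "y = (\<lambda>_. 0)" using faith yN by blast
  have "p j \<circ> p i = adj xj \<circ> y \<circ> xi" unfolding y_def using xi xj by (simp add: comp_assoc)
  also have "\<dots> = (\<lambda>_. 0)" unfolding y0 using comp_zero[OF axj] by (simp add: zero_comp)
  finally show ?thesis .
qed

lemma zero_prod:
  assumes i: "i < n" and j: "j < n" and X0: "X i j = 0"
  shows "p j \<circ> p i = (\<lambda>_. 0)" "p i \<circ> p j = (\<lambda>_. 0)"
  using zero_prod1[OF i j X0] zero_prod1[OF j i] X0 Xsym i j by auto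

lemma pos:
  assumes a: "a < n" and b: "b < n" and X0: "X b a \<noteq> 0"
  shows "Im (\<tau> (p a \<circ> (p b \<circ> p a))) = 0 \<and> 0 < Re (\<tau> (p a \<circ> (p b \<circ> p a)))"
proof -
  obtain xb where xb: "xb \<in> N" "p b = adj xb \<circ> xb" using pN b by blast
  have axb: "adj xb \<in> N" using adjN xb by auto
  have paN: "p a \<in> N" using pinN a by simp
  define z where "z = xb \<circ> p a"
  have zN: "z \<in> N" unfolding z_def using compN xb paN by simp
  have az: "adj z = p a \<circ> adj xb" unfolding z_def using adj_comp[OF xb(1) paN] padj[OF a] by simp
  have "adj z \<circ> z = (p a \<circ> adj xb) \<circ> z" using az by simp
  also have "\<dots> = p a \<circ> (p b \<circ> p a)" unfolding z_def xb(2) by (simp add: comp_assoc)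
  finally have e: "adj z \<circ> z = p a \<circ> (p b \<circ> p a)" .
  have P: "Im (\<tau> (p a \<circ> (p b \<circ> p a))) = 0 \<and> 0 \<le> Re (\<tau> (p a \<circ> (p b \<circ> p a)))"
    using tau_pos[OF zN] e by simp
  have "Re (\<tau> (p a \<circ> (p b \<circ> p a))) \<noteq> 0"
  proof
    assume r: "Re (\<tau> (p a \<circ> (p b \<circ> p a))) = 0"
    then have "\<tau> (adj z \<circ> z) = 0" using P e by (simp add: complex_eq_iff)
    then have z0: "z = (\<lambda>_. 0)" using faith zN by blast
    have "p b \<circ> p a = adj xb \<circ> z" unfolding z_def xb(2) by (simp add: comp_assoc)
    also have "\<dots> = (\<lambda>_. 0)" unfolding z0 using comp_zero[OF axb] .
    finally have "\<tau> (p b \<circ> p a) = 0" using tau_zero by simp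
    then show False using tX a b X0 by simp
  qed
  then show ?thesis using P by linarith
qed

definition "q = (\<lambda>z. \<Sum>j<n. w j *\<^sub>R p j z)"

lemma qN: "q \<in> N"
  unfolding q_def using tau_sum[of "{..<n}" p w] pinN by simp

lemma tau_qM: "M \<in> N \<Longrightarrow> \<tau> (q \<circ> M) = (\<Sum>j<n. complex_of_real (w j) * \<tau> (p j \<circ> M))"
proof -
  assume M: "M \<in> N"
  have "q \<circ> M = (\<lambda>z. \<Sum>j<n. w j *\<^sub>R (p j \<circ> M) z)" unfolding q_def by (simp add: comp_def)
  then show ?thesis using tau_sum[of "{..<n}" "\<lambda>j. p j \<circ> M" w] pinN compN M by simp
qed

lemma q_zero: "q = (\<lambda>_. 0)"
proof -
  have sa: "is_adjoint (p j) (p j)" if "j < n" for j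
    using adjN[OF pinN[OF that]] padj[OF that] by simp
  have "is_adjoint q q"
    unfolding is_adjoint_def q_def
    by (simp add: inner_sum_left inner_sum_right sa[unfolded is_adjoint_def])
  then have aq: "adj q = q" using adj_eq by blast
  have inner: "\<tau> (p i \<circ> q) = 0" if i: "i < n" for i
  proof -
    have "\<tau> (p i \<circ> q) = \<tau> (q \<circ> p i)" using tau_comm pinN[OF i] qN by blast
    also have "\<dots> = (\<Sum>j<n. complex_of_real (w j) * \<tau> (p j \<circ> p i))" using tau_qM pinN[OF i] by blast
    also have "\<dots> = (\<Sum>j<n. complex_of_real (X i j * w j))"
      using tX i Xsym by (intro sum.cong) (auto simp: mult.commute)
    also have "\<dots> = complex_of_real (\<Sum>j<n. X i j * w j)" by simp
    also have "\<dots> = 0" using ker i by simp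
    finally show ?thesis .
  qed
  have "\<tau> (q \<circ> q) = (\<Sum>i<n. complex_of_real (w i) * \<tau> (p i \<circ> q))" using tau_qM qN by blast
  also have "\<dots> = 0" using inner by simp
  finally have "\<tau> (adj q \<circ> q) = 0" using aq by simp
  then show ?thesis using faith qN by blast
qed

lemma pair:
  assumes a: "a < n" and b: "b < n" and ab: "a \<noteq> b" and Xab: "X a b \<noteq> 0"
    and sep: "\<forall>j<n. j \<noteq> a \<longrightarrow> j \<noteq> b \<longrightarrow> X j b = 0 \<or> X a j = 0"
  shows "w a * Re (\<tau> (p a \<circ> (p b \<circ> p a))) + w b * Re (\<tau> (p b \<circ> (p a \<circ> p b))) = 0"
proof -
  have paN: "p a \<in> N" and pbN: "p b \<in> N" using pinN a b by auto
  define M where "M = p b \<circ> p a"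
  have MN: "M \<in> N" unfolding M_def using compN paN pbN by simp
  have "\<tau> (q \<circ> M) = 0" unfolding q_zero zero_comp using tau_zero .
  then have s0: "(\<Sum>j<n. complex_of_real (w j) * \<tau> (p j \<circ> M)) = 0" using tau_qM MN by simp
  have other: "\<tau> (p j \<circ> M) = 0" if j: "j < n" "j \<noteq> a" "j \<noteq> b" for j
  proof -
    have pjN: "p j \<in> N" using pinN j by simp
    consider "X j b = 0" | "X a j = 0" using sep j by blast
    then show ?thesis
    proof cases
      case 1
      then have "p j \<circ> p b = (\<lambda>_. 0)" using zero_prod j b by blast
      then have "p j \<circ> M = (\<lambda>_. 0)" unfolding M_def by (metis comp_assoc zero_comp)
      then show ?thesis using tau_zero by simp
    next
      case 2
      then have z: "p a \<circ> p j = (\<lambda>_. 0)" using zero_prod j a by blast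
      have "\<tau> (p j \<circ> M) = \<tau> ((p j \<circ> p b) \<circ> p a)" unfolding M_def by (simp add: comp_assoc)
      also have "\<dots> = \<tau> (p a \<circ> (p j \<circ> p b))" using tau_comm compN pjN pbN paN by blast
      also have "\<dots> = \<tau> ((p a \<circ> p j) \<circ> p b)" by (simp add: comp_assoc)
      also have "\<dots> = 0" unfolding z zero_comp using tau_zero .
      finally show ?thesis .
    qed
  qed
  have "(\<Sum>j<n. complex_of_real (w j) * \<tau> (p j \<circ> M)) =
        (\<Sum>j\<in>{a,b}. complex_of_real (w j) * \<tau> (p j \<circ> M))"
    by (rule sum.mono_neutral_right) (use a b other in auto)
  also have "\<dots> = complex_of_real (w a) * \<tau> (p a \<circ> M) + complex_of_real (w b) * \<tau> (p b \<circ> M)"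
    using ab by simp
  finally have s1: "complex_of_real (w a) * \<tau> (p a \<circ> M) + complex_of_real (w b) * \<tau> (p b \<circ> M) = 0"
    using s0 by simp
  have "\<tau> (p b \<circ> M) = \<tau> ((p b \<circ> p a) \<circ> p b)"
    unfolding M_def using tau_comm[OF pbN, of "p b \<circ> p a"] compN pbN paN by simp
  then have e2: "\<tau> (p b \<circ> (p b \<circ> p a)) = \<tau> (p b \<circ> (p a \<circ> p b))" unfolding M_def by (simp add: comp_assoc)
  have "Re (complex_of_real (w a) * \<tau> (p a \<circ> M) + complex_of_real (w b) * \<tau> (p b \<circ> M)) = 0"
    using s1 by simp
  then show ?thesis unfolding M_def e2 by simp
qed

end



lemma suc_mod: "u < n \<Longrightarrow> Suc u mod n = (if Suc u = n then 0 else Suc u)"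
  by auto

lemma cadj_iff: "u < n \<Longrightarrow> v < n \<Longrightarrow>
   cycle_adj n u v \<longleftrightarrow> (v = Suc u \<or> u = Suc v \<or> (Suc u = n \<and> v = 0) \<or> (Suc v = n \<and> u = 0))"
  unfolding cycle_adj_def by (auto simp: suc_mod)

lemma bl_shift: "bl n (\<lambda>i j. M i j - c * idmat i j) u u = bl n M u u - c * (\<Sum>i<n. (u i)^2)"
proof -
  have inner: "(\<Sum>j<n. u i * (c * idmat i j) * u j) = c * (u i)^2" if "i < n" for i
  proof -
    have "(\<Sum>j<n. u i * (c * idmat i j) * u j) = (\<Sum>j<n. if j = i then c * (u i)^2 else 0)"
      by (intro sum.cong) (auto simp: idmat_def power2_eq_square)
    then show ?thesis using that by simp
  qed
  have "bl n (\<lambda>i j. M i j - c * idmat i j) u u = (\<Sum>i<n. \<Sum>j<n. u i * M i j * u j - u i * (c * idmat i j) * u j)"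
    unfolding bl_def by (simp add: algebra_simps)
  also have "\<dots> = bl n M u u - (\<Sum>i<n. \<Sum>j<n. u i * (c * idmat i j) * u j)"
    unfolding bl_def by (simp add: sum_subtractf)
  also have "(\<Sum>i<n. \<Sum>j<n. u i * (c * idmat i j) * u j) = (\<Sum>i<n. c * (u i)^2)"
    using inner by simp
  finally show ?thesis by (simp add: sum_distrib_left)
qed

lemma sum01: "(n::nat) \<ge> 2 \<Longrightarrow> (\<forall>j. j \<noteq> 0 \<longrightarrow> j \<noteq> 1 \<longrightarrow> f j = 0) \<Longrightarrow> (\<Sum>j<n. f j) = f 0 + (f 1 :: real)"
proof -
  assume n: "n \<ge> 2" and z: "\<forall>j. j \<noteq> 0 \<longrightarrow> j \<noteq> 1 \<longrightarrow> f j = 0"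
  have "(\<Sum>j<n. f j) = (\<Sum>j\<in>{0,1}. f j)"
    by (rule sum.mono_neutral_right) (use n z in auto)
  then show ?thesis by simp
qed

lemma sign_lemma:
  fixes x y al be :: real
  assumes "al > 0" "be > 0" "x * al + y * be = 0"
  shows "(x = 0 \<longleftrightarrow> y = 0) \<and> x * y \<le> 0"
proof -
  have "x * al = - (y * be)" using assms by simp
  then have s: "sgn (x * al) = - sgn (y * be)" by (metis sgn_minus)
  then have "sgn x = - sgn y" using assms by (simp add: sgn_mult)
  then show ?thesis by (auto simp: sgn_if mult_le_0_iff split: if_splits)
qed

theorem lemma6p3:
  fixes t :: nat and lam :: real
  assumes "t \<ge> 2"
    and "is_least_eigenvalue (2*t+1) (cycle_adjmat (2*t+1)) lam"
  shows "doubly_nonnegative (2*t+1) (\<lambda>i j. cycle_adjmat (2*t+1) i j - lam * idmat i j)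
    \<and> (\<forall>u<2*t+1. \<forall>v<2*t+1.
          support_adj (\<lambda>i j. cycle_adjmat (2*t+1) i j - lam * idmat i j) u v \<longleftrightarrow> cycle_adj (2*t+1) u v)
    \<and> (\<forall>(J::'h::{real_inner,complete_space} \<Rightarrow> 'h) N \<tau>. tracial_vna J N \<tau> \<longrightarrow>
          \<not> Npos_factorizable N \<tau> (2*t+1) (\<lambda>i j. cycle_adjmat (2*t+1) i j - lam * idmat i j))"
proof -
  define n where "n = 2*t+1"
  define A where "A = cycle_adjmat n"
  define X where "X = (\<lambda>i j. A i j - lam * idmat i j)"
  have n5: "n \<ge> 5" using assms(1) unfolding n_def by simp
  have lea: "is_least_eigenvalue n A lam" using assms(2) unfolding n_def A_def by simp
  have Aval: "A i j = (if cycle_adj n i j then 1 else 0)" for i j unfolding A_def cycle_adjmat_def by simp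
  have symA: "\<forall>i<n. \<forall>j<n. A i j = A j i" unfolding Aval cycle_adj_def by auto
  have irr: "\<not> cycle_adj n i i" if "i < n" for i using that n5 by (simp add: cadj_iff)
  have symX: "\<forall>i<n. \<forall>j<n. X i j = X j i" using symA unfolding X_def idmat_def by auto
  have Xoff: "X i j = A i j" if "i \<noteq> j" for i j using that unfolding X_def idmat_def by simp
  obtain m v where mv: "\<exists>i<n. v i \<noteq> 0" "\<forall>i<n. (\<Sum>j<n. A i j * v j) = m * v i"
      "\<forall>u. m * (\<Sum>i<n. (u i)^2) \<le> bl n A u u"
    using min_eig[of n A] n5 symA by auto
  have "is_eigenvalue n A m" unfolding is_eigenvalue_def using mv by blast
  then have lm: "lam \<le> m" using lea unfolding is_least_eigenvalue_def by blast
  define e where "e = (\<lambda>i::nat. if i = 0 then 1 else if i = 1 then -1 else (0::real))"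
  have "(\<Sum>i<n. (e i)^2) = (e 0)^2 + (e 1)^2" by (rule sum01) (use n5 in \<open>auto simp: e_def\<close>)
  then have ne: "(\<Sum>i<n. (e i)^2) = 2" by (simp add: e_def)
  have a01: "A 0 0 = 0" "A 0 1 = 1" "A 1 0 = 1" "A 1 1 = 0"
    using n5 by (auto simp: Aval cadj_iff)
  have "bl n A e e = (\<Sum>j<n. e 0 * A 0 j * e j) + (\<Sum>j<n. e 1 * A 1 j * e j)"
    unfolding bl_def by (rule sum01) (use n5 in \<open>auto simp: e_def\<close>)
  also have "\<dots> = (e 0 * A 0 0 * e 0 + e 0 * A 0 1 * e 1) + (e 1 * A 1 0 * e 0 + e 1 * A 1 1 * e 1)"
    by (subst sum01, use n5 in \<open>auto simp: e_def\<close>)+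
  finally have be: "bl n A e e = -2" using a01 by (simp add: e_def)
  have "m * 2 \<le> -2" using mv(3)[rule_format, of e] ne be by simp
  then have lamneg: "lam \<le> -1" using lm by simp
  have psdX: "psd n X"
    unfolding psd_def symmetric_mat_def
  proof (intro conjI)
    show "\<forall>i<n. \<forall>j<n. X i j = X j i" using symX .
    show "\<forall>u. 0 \<le> (\<Sum>i<n. \<Sum>j<n. u i * X i j * u j)"
    proof
    fix u :: "nat \<Rightarrow> real"
    have s0: "0 \<le> (\<Sum>i<n. (u i)^2)" by (simp add: sum_nonneg)
    have "(\<Sum>i<n. \<Sum>j<n. u i * X i j * u j) = bl n A u u - lam * (\<Sum>i<n. (u i)^2)"
      using bl_shift[of n A lam u] unfolding X_def bl_def by simp
    moreover have "m * (\<Sum>i<n. (u i)^2) \<le> bl n A u u" using mv(3) by blast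
    moreover have "lam * (\<Sum>i<n. (u i)^2) \<le> m * (\<Sum>i<n. (u i)^2)" using lm s0 by (simp add: mult_right_mono)
    ultimately show "0 \<le> (\<Sum>i<n. \<Sum>j<n. u i * X i j * u j)" by linarith
    qed
  qed
  have nnX: "\<forall>i<n. \<forall>j<n. 0 \<le> X i j"
  proof (intro allI impI)
    fix i j assume i: "i < n" and j: "j < n"
    show "0 \<le> X i j"
    proof (cases "i = j")
      case True then show ?thesis using irr i lamneg unfolding X_def Aval idmat_def by simp
    next
      case False then show ?thesis unfolding Xoff[OF False] Aval by simp
    qed
  qed
  have P1: "doubly_nonnegative n X" unfolding doubly_nonnegative_def using psdX nnX by blast
  have P2: "\<forall>u<n. \<forall>v<n. support_adj X u v \<longleftrightarrow> cycle_adj n u v"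
  proof (intro allI impI)
    fix u v assume u: "u < n" and v: "v < n"
    show "support_adj X u v \<longleftrightarrow> cycle_adj n u v"
    proof (cases "u = v")
      case True then show ?thesis using irr u unfolding support_adj_def by simp
    next
      case False then show ?thesis unfolding support_adj_def Xoff[OF False] Aval by simp
    qed
  qed
  have P3: "\<not> Npos_factorizable N \<tau> n X" if tvJ: "tracial_vna J N \<tau>"
    for J :: "'h::{real_inner,complete_space} \<Rightarrow> 'h" and N \<tau>
  proof
    assume "Npos_factorizable N \<tau> n X"
    then obtain p where pp: "\<forall>i<n. p i \<in> Npos N" "\<forall>i<n. \<forall>j<n. \<tau> (p i \<circ> p j) = complex_of_real (X i j)"
      unfolding Npos_factorizable_def by blast
    obtain w where w: "\<exists>i<n. w i \<noteq> 0" "\<forall>i<n. (\<Sum>j<n. A i j * w j) = lam * w i"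
      using lea unfolding is_least_eigenvalue_def is_eigenvalue_def by blast
    have ker: "\<forall>i<n. (\<Sum>j<n. X i j * w j) = 0"
    proof (intro allI impI)
      fix i assume i: "i < n"
      have d: "(\<Sum>j<n. lam * idmat i j * w j) = (\<Sum>j<n. if j = i then lam * w i else 0)"
        by (intro sum.cong) (auto simp: idmat_def)
      have "(\<Sum>j<n. X i j * w j) = (\<Sum>j<n. A i j * w j - lam * idmat i j * w j)"
        unfolding X_def by (simp add: algebra_simps)
      also have "\<dots> = (\<Sum>j<n. A i j * w j) - lam * w i"
        using i by (simp add: sum_subtractf d)
      finally show "(\<Sum>j<n. X i j * w j) = 0" using w(2) i by simp
    qed
    have pN: "\<forall>i<n. \<exists>x\<in>N. p i = adj x \<circ> x" using pp(1) unfolding Npos_def by blast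
    interpret fz J N \<tau> n p X w
      by unfold_locales (use tvJ pN pp(2) symX ker in auto)
    define nx where "nx a = (if Suc a = n then 0 else Suc a)" for a
    have rel: "(w a = 0 \<longleftrightarrow> w (nx a) = 0) \<and> w a * w (nx a) \<le> 0" if a: "a < n" for a
    proof -
      let ?b = "nx a"
      have b: "?b < n" using a n5 unfolding nx_def by auto
      have ab: "a \<noteq> ?b" using a n5 unfolding nx_def by auto
      have adj_ab: "cycle_adj n a ?b" using a b unfolding nx_def by (auto simp: cadj_iff)
      have Xab: "X a ?b = 1" and Xba: "X ?b a = 1"
        using adj_ab ab symA a b unfolding Xoff[OF ab] Xoff[OF ab[symmetric]] Aval by auto
      have sep: "\<forall>j<n. j \<noteq> a \<longrightarrow> j \<noteq> ?b \<longrightarrow> X j ?b = 0 \<or> X a j = 0"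
      proof (intro allI impI)
        fix j assume j: "j < n" "j \<noteq> a" "j \<noteq> ?b"
        have "\<not> cycle_adj n j ?b \<or> \<not> cycle_adj n a j"
          using a b j n5 unfolding nx_def by (auto simp: cadj_iff split: if_splits)
        then show "X j ?b = 0 \<or> X a j = 0"
          using j unfolding Xoff[OF j(3)] Xoff[OF j(2)[symmetric]] Aval by auto
      qed
      have E: "w a * Re (\<tau> (p a \<circ> (p ?b \<circ> p a))) + w ?b * Re (\<tau> (p ?b \<circ> (p a \<circ> p ?b))) = 0"
        using pair[OF a b ab] Xab sep by simp
      have "0 < Re (\<tau> (p a \<circ> (p ?b \<circ> p a)))" using pos[OF a b] Xba by simp
      moreover have "0 < Re (\<tau> (p ?b \<circ> (p a \<circ> p ?b)))" using pos[OF b a] Xab by simp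
      ultimately show ?thesis using sign_lemma E by blast
    qed
    have nxS: "nx k = Suc k" if "Suc k < n" for k using that unfolding nx_def by simp
    show False
    proof (cases "w 0 = 0")
      case True
      have "\<forall>k. k < n \<longrightarrow> w k = 0"
      proof (intro allI)
        fix k show "k < n \<longrightarrow> w k = 0"
        proof (induction k)
          case 0 then show ?case using True by simp
        next
          case (Suc k) then show ?case using rel[of k] nxS[of k] by auto
        qed
      qed
      then show False using w(1) by blast
    next
      case False
      have inv: "k < n \<longrightarrow> (even k \<longrightarrow> w 0 * w k > 0) \<and> (odd k \<longrightarrow> w 0 * w k < 0)" for k
      proof (induction k)
        case 0 then show ?case using False by (auto simp: zero_less_mult_iff linorder_neq_iff)
      next
        case (Suc k)
        show ?case
        proof
          assume sk: "Suc k < n"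
          have r: "(w k = 0 \<longleftrightarrow> w (Suc k) = 0) \<and> w k * w (Suc k) \<le> 0" using rel[of k] nxS[OF sk] sk by simp
          have wk: "w k \<noteq> 0" using Suc sk by (cases "even k") auto
          then have lt: "w k * w (Suc k) < 0" using r by (metis mult_eq_0_iff order_le_less)
          show "(even (Suc k) \<longrightarrow> w 0 * w (Suc k) > 0) \<and> (odd (Suc k) \<longrightarrow> w 0 * w (Suc k) < 0)"
          proof (cases "even k")
            case True
            then have "w 0 * w k > 0" using Suc sk by simp
            then have "w 0 * w (Suc k) < 0" using lt by (auto simp: zero_less_mult_iff mult_less_0_iff)
            then show ?thesis using True by simp
          next
            case False
            then have "w 0 * w k < 0" using Suc sk by simp
            then have "w 0 * w (Suc k) > 0" using lt by (auto simp: zero_less_mult_iff mult_less_0_iff)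
            then show ?thesis using False by simp
          qed
        qed
      qed
      have "w 0 * w (2*t) > 0" using inv[of "2*t"] unfolding n_def by simp
      moreover have "w (2*t) * w (nx (2*t)) \<le> 0" using rel[of "2*t"] unfolding n_def by simp
      moreover have "nx (2*t) = 0" unfolding nx_def n_def by simp
      ultimately show False by (simp add: mult.commute)
    qed
  qed
  show ?thesis using P1 P2 P3 unfolding n_def A_def X_def by blast
qed

end
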